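(* Let $k$ be a field, $R=k[x,y]$, $I=(x^d,y^d,x^by^{d-b})$ with $d\ge2$, $1\le b\le d-1$, $\gcd(d,b)=1$, and $J=(x^d,y^d)$. Then for every $\ell\ge1$ there exist nonnegative integers $s_\ell,t_\ell$ with $$JI^{\ell-1}:I^\ell=(x^{s_\ell},y^{t_\ell}).$$ *)

theory Defs
  imports "HOL-Computational_Algebra.Polynomial"
begin

definition is_ideal :: "'a::comm_ring_1 set \<Rightarrow> bool" where
  "is_ideal I \<longleftrightarrow> 0 \<in> I \<and> (\<forall>a\<in>I. \<forall>b\<in>I. a + b \<in> I) \<and> (\<forall>r. \<forall>a\<in>I. r * a \<in> I)"

definition ideal_gen :: "'a::comm_ring_1 set \<Rightarrow> 'a set" where
  "ideal_gen S = \<Inter>{I. is_ideal I \<and> S \<subseteq> I}"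

definition ideal_mult :: "'a::comm_ring_1 set \<Rightarrow> 'a set \<Rightarrow> 'a set" where
  "ideal_mult I K = ideal_gen {a * b | a b. a \<in> I \<and> b \<in> K}"

primrec ideal_pow :: "'a::comm_ring_1 set \<Rightarrow> nat \<Rightarrow> 'a set" where
  "ideal_pow I 0 = UNIV"
| "ideal_pow I (Suc n) = ideal_mult I (ideal_pow I n)"

definition ideal_colon :: "'a::comm_ring_1 set \<Rightarrow> 'a set \<Rightarrow> 'a set" where
  "ideal_colon I K = {f. \<forall>g\<in>K. f * g \<in> I}"

text \<open>k[x,y] is modelled as (k[x])[y], i.e. type 'a poly poly.\<close>

definition var_x :: "'a::comm_ring_1 poly poly" where
  "var_x = [:[:0, 1:]:]"

definition var_y :: "'a::comm_ring_1 poly poly" where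
  "var_y = [:0, 1:]"

end

theory Submission
  imports Defs
begin

definition mon :: "nat \<Rightarrow> nat \<Rightarrow> 'a::comm_ring_1 poly poly" where
  "mon i j = monom (monom 1 i) j"

lemma mon_mult: "mon i j * mon i' j' = (mon (i+i') (j+j') :: 'a::comm_ring_1 poly poly)"
  by (simp add: mon_def mult_monom)

lemma var_x_monom: "(var_x :: 'a::comm_ring_1 poly poly) = monom (monom 1 1) 0"
  by (simp add: var_x_def poly_eq_iff coeff_pCons split: nat.split)

lemma var_y_monom: "(var_y :: 'a::comm_ring_1 poly poly) = monom 1 1"
  by (simp add: var_y_def poly_eq_iff coeff_pCons split: nat.split)

lemma var_x_pow: "(var_x :: 'a::comm_ring_1 poly poly) ^ i = mon i 0"
  by (simp add: var_x_monom mon_def monom_power)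

lemma var_y_pow: "(var_y :: 'a::comm_ring_1 poly poly) ^ j = mon 0 j"
  by (simp add: var_y_monom mon_def monom_power monom_0)

definition upset :: "(nat \<times> nat) set \<Rightarrow> (nat \<times> nat) set" where
  "upset S = {(i,j). \<exists>a c. (a,c) \<in> S \<and> a \<le> i \<and> c \<le> j}"

definition MI :: "(nat \<times> nat) set \<Rightarrow> 'a::comm_ring_1 poly poly set" where
  "MI S = {f. \<forall>i j. coeff (coeff f j) i \<noteq> 0 \<longrightarrow> (i,j) \<in> upset S}"

definition padd :: "nat \<times> nat \<Rightarrow> nat \<times> nat \<Rightarrow> nat \<times> nat" where
  "padd u v = (fst u + fst v, snd u + snd v)"

definition psum :: "(nat \<times> nat) set \<Rightarrow> (nat \<times> nat) set \<Rightarrow> (nat \<times> nat) set" where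
  "psum S T = {padd u v | u v. u \<in> S \<and> v \<in> T}"

lemma psumI: "u \<in> S \<Longrightarrow> v \<in> T \<Longrightarrow> padd u v \<in> psum S T"
  unfolding psum_def by blast

lemma upsetI: "(a,c) \<in> S \<Longrightarrow> a \<le> i \<Longrightarrow> c \<le> j \<Longrightarrow> (i,j) \<in> upset S"
  unfolding upset_def by blast

lemma psumE: "x \<in> psum S T \<Longrightarrow> (\<And>u v. x = padd u v \<Longrightarrow> u \<in> S \<Longrightarrow> v \<in> T \<Longrightarrow> P) \<Longrightarrow> P"
  unfolding psum_def by blast

lemma coeff2_mult_nz:
  fixes p q :: "'a::comm_ring_1 poly poly"
  assumes "coeff (coeff (p*q) j) i \<noteq> 0"
  shows "\<exists>i1 j1 i2 j2. i = i1+i2 \<and> j = j1+j2 \<and> coeff (coeff p j1) i1 \<noteq> 0 \<and> coeff (coeff q j2) i2 \<noteq> 0"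
proof -
  have "coeff (coeff (p*q) j) i = (\<Sum>j1\<le>j. \<Sum>i1\<le>i. coeff (coeff p j1) i1 * coeff (coeff q (j-j1)) (i-i1))"
    by (simp add: coeff_mult coeff_sum)
  with assms obtain j1 where j1: "j1 \<le> j" and "(\<Sum>i1\<le>i. coeff (coeff p j1) i1 * coeff (coeff q (j-j1)) (i-i1)) \<noteq> 0"
    by (metis (no_types, lifting) atMost_iff sum.neutral)
  then obtain i1 where "i1 \<le> i" and "coeff (coeff p j1) i1 * coeff (coeff q (j-j1)) (i-i1) \<noteq> 0"
    by (metis (no_types, lifting) atMost_iff sum.neutral)
  then show ?thesis using j1
    by (intro exI[of _ i1] exI[of _ j1] exI[of _ "i-i1"] exI[of _ "j-j1"]) auto
qed

lemma MI_mult: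
  fixes p q :: "'a::comm_ring_1 poly poly"
  assumes "p \<in> MI S1" "q \<in> MI S2"
  shows "p * q \<in> MI (psum S1 S2)"
  unfolding MI_def
proof (intro CollectI allI impI)
  fix i j assume "coeff (coeff (p*q) j) i \<noteq> 0"
  then obtain i1 j1 i2 j2 where e: "i = i1+i2" "j = j1+j2" and
    n1: "coeff (coeff p j1) i1 \<noteq> 0" and n2: "coeff (coeff q j2) i2 \<noteq> 0"
    using coeff2_mult_nz by blast
  from n1 assms(1) obtain a1 c1 where 1: "(a1,c1) \<in> S1" "a1 \<le> i1" "c1 \<le> j1"
    unfolding MI_def upset_def by blast
  from n2 assms(2) obtain a2 c2 where 2: "(a2,c2) \<in> S2" "a2 \<le> i2" "c2 \<le> j2"
    unfolding MI_def upset_def by blast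
  have "padd (a1,c1) (a2,c2) \<in> psum S1 S2" using 1 2 unfolding psum_def by blast
  then show "(i,j) \<in> upset (psum S1 S2)" using 1 2 e unfolding upset_def padd_def
    by (intro CollectI case_prodI exI[of _ "a1+a2"] exI[of _ "c1+c2"]) auto
qed

lemma MI_ideal: "is_ideal (MI S :: 'a::comm_ring_1 poly poly set)"
  unfolding is_ideal_def
proof (intro conjI ballI allI)
  show "0 \<in> MI S" by (simp add: MI_def)
next
  fix a c :: "'a poly poly" assume a: "a \<in> MI S" and c: "c \<in> MI S"
  show "a + c \<in> MI S" unfolding MI_def
  proof (intro CollectI allI impI)
    fix i j assume "coeff (coeff (a + c) j) i \<noteq> 0"
    then have "coeff (coeff a j) i \<noteq> 0 \<or> coeff (coeff c j) i \<noteq> 0" by auto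
    then show "(i,j) \<in> upset S" using a c unfolding MI_def by blast
  qed
next
  fix r a :: "'a poly poly" assume a: "a \<in> MI S"
  show "r * a \<in> MI S" unfolding MI_def
  proof (intro CollectI allI impI)
    fix i j assume "coeff (coeff (r * a) j) i \<noteq> 0"
    then obtain i1 j1 i2 j2 where e: "i = i1+i2" "j = j1+j2" and
      n2: "coeff (coeff a j2) i2 \<noteq> 0"
      using coeff2_mult_nz by blast
    then obtain a2 c2 where ac: "(a2,c2) \<in> S" "a2 \<le> i2" "c2 \<le> j2"
      using a unfolding MI_def upset_def by blast
    then show "(i,j) \<in> upset S" using e by (intro upsetI[of a2 c2]) auto
  qed
qed

lemma mon_MI: "(a,c) \<in> S \<Longrightarrow> mon a c \<in> MI S"
  by (auto simp: MI_def mon_def upset_def)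

lemma ideal_gen_ideal: "is_ideal (ideal_gen S)"
  unfolding ideal_gen_def is_ideal_def by auto

lemma ideal_gen_least: "is_ideal K \<Longrightarrow> S \<subseteq> K \<Longrightarrow> ideal_gen S \<subseteq> K"
  unfolding ideal_gen_def by auto

lemma ideal_gen_sup: "x \<in> S \<Longrightarrow> x \<in> ideal_gen S"
  unfolding ideal_gen_def by auto

lemma ideal_mult_in: "a \<in> A \<Longrightarrow> c \<in> B \<Longrightarrow> a * c \<in> ideal_mult A B"
  unfolding ideal_mult_def by (rule ideal_gen_sup) blast

lemma ideal_multl: "is_ideal K \<Longrightarrow> a \<in> K \<Longrightarrow> r * a \<in> K"
  unfolding is_ideal_def by blast

lemma ideal_add: "is_ideal K \<Longrightarrow> a \<in> K \<Longrightarrow> c \<in> K \<Longrightarrow> a + c \<in> K"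
  unfolding is_ideal_def by blast

lemma ideal_zero: "is_ideal K \<Longrightarrow> 0 \<in> K"
  unfolding is_ideal_def by blast

lemma ideal_sum: assumes "is_ideal K" "finite A" "\<And>x. x \<in> A \<Longrightarrow> f x \<in> K" shows "sum f A \<in> K"
  using assms(2,3) by (induction A rule: finite_induct) (auto intro: ideal_add ideal_zero assms(1))

lemma ideal_pow_ideal: "is_ideal (ideal_pow I n)"
  by (cases n) (simp add: is_ideal_def, simp add: ideal_mult_def ideal_gen_ideal)

lemma colon_ideal: "is_ideal K \<Longrightarrow> is_ideal (ideal_colon K A)"
  unfolding is_ideal_def ideal_colon_def by (auto simp: distrib_right mult.assoc)

lemma mulset_ideal: "is_ideal K \<Longrightarrow> is_ideal {h. c * h \<in> K}"
  unfolding is_ideal_def by (auto simp: distrib_left mult.left_commute)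

lemma MI_sub_gen: "(MI S :: 'a::comm_ring_1 poly poly set) \<subseteq> ideal_gen ((\<lambda>(a,c). mon a c) ` S)"
proof
  fix f :: "'a poly poly" assume f: "f \<in> MI S"
  let ?G = "ideal_gen ((\<lambda>(a,c). mon a c) ` S) :: 'a poly poly set"
  have id: "is_ideal ?G" by (rule ideal_gen_ideal)
  have trm: "monom (monom (coeff (coeff f j) i) i) j \<in> ?G" for i j
  proof (cases "coeff (coeff f j) i = 0")
    case True then show ?thesis using ideal_zero[OF id] by simp
  next
    case False
    then obtain a c where ac: "(a,c) \<in> S" "a \<le> i" "c \<le> j"
      using f unfolding MI_def upset_def by blast
    have "mon a c \<in> ?G" using ac by (intro ideal_gen_sup) force
    then have "monom (monom (coeff (coeff f j) i) 0) 0 * (mon (i-a) (j-c) * mon a c) \<in> ?G"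
      by (intro ideal_multl[OF id])+
    also have "monom (monom (coeff (coeff f j) i) 0) 0 * (mon (i-a) (j-c) * mon a c)
        = monom (monom (coeff (coeff f j) i) i) j"
      using ac by (simp add: mon_mult) (simp add: mon_def mult_monom)
    finally show ?thesis .
  qed
  have "f = (\<Sum>j\<le>degree f. monom (coeff f j) j)" by (simp add: poly_as_sum_of_monoms)
  also have "\<dots> = (\<Sum>j\<le>degree f. \<Sum>i\<le>degree (coeff f j). monom (monom (coeff (coeff f j) i) i) j)"
    by (intro sum.cong refl) (simp add: monom_sum[symmetric] poly_as_sum_of_monoms)
  also have "\<dots> \<in> ?G"
    by (intro ideal_sum[OF id] finite_atMost trm)
  finally show "f \<in> ?G" .
qed

definition GI :: "nat \<Rightarrow> nat \<Rightarrow> (nat \<times> nat) set" where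
  "GI d b = {(d,0),(0,d),(b,d-b)}"

definition GJ :: "nat \<Rightarrow> (nat \<times> nat) set" where
  "GJ d = {(d,0),(0,d)}"

primrec gp :: "nat \<Rightarrow> nat \<Rightarrow> nat \<Rightarrow> (nat \<times> nat) set" where
  "gp d b 0 = {(0,0)}"
| "gp d b (Suc n) = psum (GI d b) (gp d b n)"

lemma gp_sum: "b \<le> d \<Longrightarrow> u \<in> gp d b n \<Longrightarrow> fst u + snd u = d * n"
proof (induction n arbitrary: u)
  case 0 then show ?case by simp
next
  case (Suc n)
  then obtain g h where "u = padd g h" "g \<in> GI d b" "h \<in> gp d b n" by (auto simp: psum_def)
  then show ?case using Suc by (auto simp: padd_def GI_def)
qed

lemma GK_sum: "b \<le> d \<Longrightarrow> u \<in> psum (GJ d) (gp d b n) \<Longrightarrow> fst u + snd u = d * Suc n"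
proof -
  assume bd: "b \<le> d" and "u \<in> psum (GJ d) (gp d b n)"
  then obtain g h where "u = padd g h" "g \<in> GJ d" "h \<in> gp d b n" by (auto simp: psum_def)
  then show ?thesis using gp_sum[OF bd] by (auto simp: padd_def GJ_def)
qed

lemma gp_diag: "(b*n, (d-b)*n) \<in> gp d b n"
proof (induction n)
  case 0 then show ?case by simp
next
  case (Suc n)
  have "(b*Suc n, (d-b)*Suc n) = padd (b,d-b) (b*n, (d-b)*n)" by (simp add: padd_def)
  moreover have "(b,d-b) \<in> GI d b" by (simp add: GI_def)
  ultimately show ?case using Suc psumI by (metis gp.simps(2))
qed

lemma gp_dec: "gp d b (Suc n) \<subseteq> insert (b*Suc n, (d-b)*Suc n) (psum (GJ d) (gp d b n))"
proof (induction n)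
  case 0
  show ?case
  proof
    fix x assume "x \<in> gp d b (Suc 0)"
    then obtain g where g: "x = padd g (0,0)" "g \<in> GI d b" by (auto simp: psum_def)
    show "x \<in> insert (b*Suc 0, (d-b)*Suc 0) (psum (GJ d) (gp d b 0))"
    proof (cases "g \<in> GJ d")
      case True
      have "(0,0) \<in> gp d b 0" by simp
      then have "x \<in> psum (GJ d) (gp d b 0)" using g True unfolding psum_def by blast
      then show ?thesis by blast
    next
      case False then have "g = (b, d-b)" using g by (auto simp: GI_def GJ_def)
      then show ?thesis using g by (simp add: padd_def)
    qed
  qed
next
  case (Suc n)
  show ?case
  proof
    fix x assume "x \<in> gp d b (Suc (Suc n))"
    then have "x \<in> psum (GI d b) (gp d b (Suc n))" by (simp only: gp.simps(2))
    then obtain g h where g: "x = padd g h" "g \<in> GI d b" "h \<in> gp d b (Suc n)" by (rule psumE)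
    show "x \<in> insert (b*Suc (Suc n), (d-b)*Suc (Suc n)) (psum (GJ d) (gp d b (Suc n)))"
    proof (cases "g \<in> GJ d")
      case True then show ?thesis using g psumI by blast
    next
      case False then have gb: "g = (b, d-b)" using g by (auto simp: GI_def GJ_def)
      from g(3) Suc have "h \<in> insert (b*Suc n, (d-b)*Suc n) (psum (GJ d) (gp d b n))" by blast
      then show ?thesis
      proof
        assume "h = (b*Suc n, (d-b)*Suc n)"
        then show ?thesis using g gb by (simp add: padd_def)
      next
        assume "h \<in> psum (GJ d) (gp d b n)"
        then obtain g' h' where h: "h = padd g' h'" "g' \<in> GJ d" "h' \<in> gp d b n" by (rule psumE)
        have "padd g h' \<in> gp d b (Suc n)" using g h psumI by (metis gp.simps(2))
        moreover have "x = padd g' (padd g h')" using g h by (simp add: padd_def)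
        ultimately show ?thesis using h psumI by blast
      qed
    qed
  qed
qed

lemma I_MI: "(ideal_gen {var_x^d, var_y^d, var_x^b*var_y^(d-b)} :: 'a::comm_ring_1 poly poly set) \<subseteq> MI (GI d b)"
  by (intro ideal_gen_least MI_ideal)
    (auto simp: var_x_pow var_y_pow mon_mult intro!: mon_MI simp: GI_def)

lemma J_MI: "(ideal_gen {var_x^d, var_y^d} :: 'a::comm_ring_1 poly poly set) \<subseteq> MI (GJ d)"
  by (intro ideal_gen_least MI_ideal)
    (auto simp: var_x_pow var_y_pow intro!: mon_MI simp: GJ_def)

lemma mult_MI:
  assumes "A \<subseteq> MI S1" "B \<subseteq> MI S2"
  shows "ideal_mult A B \<subseteq> MI (psum S1 S2)"
  unfolding ideal_mult_def using assms
  by (intro ideal_gen_least MI_ideal) (auto intro!: MI_mult)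

lemma pow_MI: "ideal_pow (ideal_gen {var_x^d, var_y^d, var_x^b*var_y^(d-b)} :: 'a::comm_ring_1 poly poly set) n
   \<subseteq> MI (gp d b n)"
proof (induction n)
  case 0 show ?case by (auto simp: MI_def upset_def)
next
  case (Suc n) then show ?case by (simp add: mult_MI I_MI)
qed

lemma mon_I: "u \<in> GI d b \<Longrightarrow> mon (fst u) (snd u) \<in> (ideal_gen {var_x^d, var_y^d, var_x^b*var_y^(d-b)} :: 'a::comm_ring_1 poly poly set)"
  by (auto simp: GI_def var_x_pow var_y_pow mon_mult intro: ideal_gen_sup)

lemma mon_J: "u \<in> GJ d \<Longrightarrow> mon (fst u) (snd u) \<in> (ideal_gen {var_x^d, var_y^d} :: 'a::comm_ring_1 poly poly set)"
  by (auto simp: GJ_def var_x_pow var_y_pow intro: ideal_gen_sup)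

lemma mon_pow: "u \<in> gp d b n \<Longrightarrow> mon (fst u) (snd u) \<in> ideal_pow (ideal_gen {var_x^d, var_y^d, var_x^b*var_y^(d-b)} :: 'a::comm_ring_1 poly poly set) n"
proof (induction n arbitrary: u)
  case 0 then show ?case by simp
next
  case (Suc n)
  then obtain g h where "u = padd g h" "g \<in> GI d b" "h \<in> gp d b n" by (auto simp: psum_def)
  then show ?case using Suc mon_I[of g d b]
    by (auto simp: padd_def mon_mult[symmetric] intro!: ideal_mult_in)
qed

lemma mon_K: "u \<in> psum (GJ d) (gp d b n) \<Longrightarrow> mon (fst u) (snd u) \<in> ideal_mult (ideal_gen {var_x^d, var_y^d}) (ideal_pow (ideal_gen {var_x^d, var_y^d, var_x^b*var_y^(d-b)} :: 'a::comm_ring_1 poly poly set) n)"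
proof -
  assume "u \<in> psum (GJ d) (gp d b n)"
  then obtain g h where "u = padd g h" "g \<in> GJ d" "h \<in> gp d b n" by (auto simp: psum_def)
  then show ?thesis using mon_pow[of h d b n] mon_J[of g d]
    by (auto simp: padd_def mon_mult[symmetric] intro!: ideal_mult_in)
qed

theorem mainTheorem9:
  fixes d b :: nat
  assumes "d \<ge> 2" and "1 \<le> b" and "b \<le> d - 1" and "gcd d b = 1"
  defines "I \<equiv> ideal_gen {var_x ^ d, var_y ^ d, var_x ^ b * var_y ^ (d - b)} :: 'k::field poly poly set"
      and "J \<equiv> ideal_gen {var_x ^ d, var_y ^ d} :: 'k::field poly poly set"
  shows "\<forall>l \<ge> 1. \<exists>s t :: nat.
           ideal_colon (ideal_mult J (ideal_pow I (l - 1))) (ideal_pow I l)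
             = ideal_gen {var_x ^ s, var_y ^ t}"
proof (intro allI impI)
  fix l :: nat assume "l \<ge> 1"
  then obtain n where l: "l = Suc n" by (cases l) auto
  have bd: "b \<le> d" using assms by simp
  define GK where "GK = psum (GJ d) (gp d b n)"
  define K where "K = ideal_mult J (ideal_pow I n)"
  define L where "L = ideal_pow I l"
  have KMI: "K \<subseteq> MI GK" unfolding K_def GK_def J_def I_def
    by (intro mult_MI J_MI pow_MI)
  have monK: "mon p q \<in> K" if "(p,q) \<in> GK" for p q
    using mon_K[of "(p,q)" d b n] that unfolding K_def GK_def J_def I_def by simp
  have LMI: "L \<subseteq> MI (gp d b l)" unfolding L_def I_def by (rule pow_MI)
  have monL: "mon p q \<in> L" if "(p,q) \<in> gp d b l" for p q
    using mon_pow[of "(p,q)" d b l] that unfolding L_def I_def by simp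
  have sumK: "p + q = d * l" if "(p,q) \<in> GK" for p q
    using GK_sum[OF bd, of "(p,q)" n] that unfolding GK_def l by simp
  have dl: "d * l = b * l + (d-b) * l" using bd by (simp add: add_mult_distrib[symmetric])
  define s where "s = (LEAST s. \<exists>p q. (p,q)\<in>GK \<and> b*l \<le> p \<and> s = p - b*l)"
  define t where "t = (LEAST t. \<exists>p q. (p,q)\<in>GK \<and> (d-b)*l \<le> q \<and> t = q - (d-b)*l)"
  have sw: "\<exists>p q. (p,q)\<in>GK \<and> b*l \<le> p \<and> s = p - b*l" unfolding s_def
  proof (rule LeastI_ex)
    have "padd (d,0) (b*n, (d-b)*n) \<in> GK" unfolding GK_def psum_def GJ_def
      using gp_diag[of b n d] by blast
    moreover have "b * l \<le> d + b*n" using bd l by simp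
    ultimately show "\<exists>x p q. (p,q)\<in>GK \<and> b*l \<le> p \<and> x = p - b*l"
      by (auto simp: padd_def)
  qed
  have tw: "\<exists>p q. (p,q)\<in>GK \<and> (d-b)*l \<le> q \<and> t = q - (d-b)*l" unfolding t_def
  proof (rule LeastI_ex)
    have "padd (0,d) (b*n, (d-b)*n) \<in> GK" unfolding GK_def psum_def GJ_def
      using gp_diag[of b n d] by blast
    moreover have "(d-b) * l \<le> d + (d-b)*n" using bd l by simp
    ultimately show "\<exists>x p q. (p,q)\<in>GK \<and> (d-b)*l \<le> q \<and> x = q - (d-b)*l"
      by (auto simp: padd_def)
  qed
  have Kid: "is_ideal K" unfolding K_def ideal_mult_def by (rule ideal_gen_ideal)
  have gens: "ideal_gen {var_x ^ s, var_y ^ t} = ideal_gen ((\<lambda>(a,c). mon a c) ` {(s,0),(0,t)})"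
    by (simp add: var_x_pow var_y_pow)
  have "ideal_colon K L = ideal_gen {var_x ^ s, var_y ^ t}"
  proof
    show "ideal_colon K L \<subseteq> ideal_gen {var_x ^ s, var_y ^ t}"
    proof
      fix f assume f: "f \<in> ideal_colon K L"
      have "mon (b*l) ((d-b)*l) \<in> L" by (rule monL) (rule gp_diag)
      then have "f * mon (b*l) ((d-b)*l) \<in> K" using f by (auto simp: ideal_colon_def)
      then have fm: "f * mon (b*l) ((d-b)*l) \<in> MI GK" using KMI by blast
      have "f \<in> MI {(s,0),(0,t)}" unfolding MI_def
      proof (intro CollectI allI impI)
        fix i j assume nz: "coeff (coeff f j) i \<noteq> 0"
        have "coeff (coeff (f * mon (b*l) ((d-b)*l)) (j + (d-b)*l)) (i + b*l) = coeff (coeff f j) i"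
          by (simp add: mult.commute[of f] mon_def coeff_monom_mult)
        with nz fm have "(i + b*l, j + (d-b)*l) \<in> upset GK"
          unfolding MI_def by auto
        then obtain p q where pq: "(p,q) \<in> GK" "p \<le> i + b*l" "q \<le> j + (d-b)*l"
          unfolding upset_def by blast
        have pqs: "p + q = d * l" using sumK pq(1) .
        show "(i,j) \<in> upset {(s,0),(0,t)}"
        proof (cases "b*l \<le> p")
          case True
          have "s \<le> p - b*l" unfolding s_def by (rule Least_le) (use pq True in blast)
          then show ?thesis using pq True by (intro upsetI[of s 0]) auto
        next
          case False
          then have q: "(d-b)*l \<le> q" using pqs dl by linarith
          have "t \<le> q - (d-b)*l" unfolding t_def by (rule Least_le) (use pq q in blast)
          then show ?thesis using pq q by (intro upsetI[of 0 t]) auto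
        qed
      qed
      then show "f \<in> ideal_gen {var_x ^ s, var_y ^ t}" using MI_sub_gen gens by blast
    qed
  next
    have cid: "is_ideal (ideal_colon K L)" by (rule colon_ideal[OF Kid])
    have key: "c \<in> ideal_colon K L"
      if cd: "\<And>p q. (p,q) \<in> gp d b l \<Longrightarrow> c * mon p q \<in> K" for c
    proof -
      have "L \<subseteq> ideal_gen ((\<lambda>(a,c). mon a c) ` gp d b l)" using LMI MI_sub_gen by blast
      also have "\<dots> \<subseteq> {h. c * h \<in> K}"
        by (intro ideal_gen_least mulset_ideal[OF Kid]) (auto intro: cd)
      finally show ?thesis by (auto simp: ideal_colon_def)
    qed
    have dec: "(p,q) \<in> GK \<or> (p,q) = (b*l, (d-b)*l)" if "(p,q) \<in> gp d b l" for p q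
      using gp_dec[of d b n] that unfolding GK_def l by blast
    have xs: "var_x ^ s \<in> ideal_colon K L" unfolding var_x_pow
    proof (rule key)
      fix p q assume "(p,q) \<in> gp d b l"
      then consider "(p,q) \<in> GK" | "(p,q) = (b*l, (d-b)*l)" using dec by blast
      then show "mon s 0 * mon p q \<in> K"
      proof cases
        case 1 then show ?thesis using monK ideal_multl[OF Kid] by blast
      next
        case 2
        obtain p' q' where w: "(p',q')\<in>GK" "b*l \<le> p'" "s = p' - b*l" using sw by blast
        have "q' \<le> (d-b)*l" using sumK[OF w(1)] dl w(2) by linarith
        have "mon s 0 * mon p q = mon 0 ((d-b)*l - q') * mon p' q'"
          using 2 w \<open>q' \<le> (d-b)*l\<close> by (simp add: mon_mult)
        then show ?thesis using ideal_multl[OF Kid monK[OF w(1)]] by metis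
      qed
    qed
    have ys: "var_y ^ t \<in> ideal_colon K L" unfolding var_y_pow
    proof (rule key)
      fix p q assume "(p,q) \<in> gp d b l"
      then consider "(p,q) \<in> GK" | "(p,q) = (b*l, (d-b)*l)" using dec by blast
      then show "mon 0 t * mon p q \<in> K"
      proof cases
        case 1 then show ?thesis using monK ideal_multl[OF Kid] by blast
      next
        case 2
        obtain p' q' where w: "(p',q')\<in>GK" "(d-b)*l \<le> q'" "t = q' - (d-b)*l" using tw by blast
        have "p' \<le> b*l" using sumK[OF w(1)] dl w(2) by linarith
        have "mon 0 t * mon p q = mon (b*l - p') 0 * mon p' q'"
          using 2 w \<open>p' \<le> b*l\<close> by (simp add: mon_mult)
        then show ?thesis using ideal_multl[OF Kid monK[OF w(1)]] by metis
      qed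
    qed
    show "ideal_gen {var_x ^ s, var_y ^ t} \<subseteq> ideal_colon K L"
      using xs ys by (intro ideal_gen_least cid) auto
  qed
  then show "\<exists>s t :: nat. ideal_colon (ideal_mult J (ideal_pow I (l - 1))) (ideal_pow I l)
             = ideal_gen {var_x ^ s, var_y ^ t}"
    unfolding K_def L_def l by auto
qed

end
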